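(* Let $\mathcal{P}$ be a dipath space and let $f: P \to V(\mathcal{P})$ be a walk in $\mathcal{P}$. Then the space $\widehat{f}$ induced by $f$ is finitary and connected.
   Context: A subset $Y$ of a linearly ordered set $X$ is called complete (in $X$) if every nonempty $Z \subseteq Y$ has a supremum and an infimum in $X$ and both lie in $Y$. A path is a linearly ordered set $(P,\le_P)$ that is complete in itself. Distinct paths may share elements; intersections and unions of paths refer to their underlying sets. A path is trivial if it has exactly one element. A set of paths is compatible if for any two paths $P,Q$ in it, $P\cap Q$ is complete in $P$ (with the order of $P$). For $x \le y$ in a path $P$, the segment of $P$ from $x$ to $y$ is the interval $[x,y]$ of $P$ with the induced order. A path $P$ connects to a path $Q$ if $P \cap Q=\{x\}$ where $x=\max P=\min Q$; in this case the concatenation of $P$ and $Q$ is $P\cup Q$ with the order extending both orders in which every element of $P$ precedes every element of $Q$. The inverse of a path is the same set with the reversed order. A dipath space is a compatible set of paths closed under segments and under concatenations (whenever $P,Q$ are members and $P$ connects to $Q$, their concatenation is a member). A path space is a dipath space closed under inverses. The ground set $V(\mathcal{P})$ is the union of the underlying sets of the paths of $\mathcal{P}$. For a set of paths $\mathcal{Q}$, $\widehat{\mathcal{Q}}$ denotes the set obtained by first adding all segments of paths of $\mathcal{Q}$ and then closing under concatenations (repeatedly adding, in countably many steps, concatenations of pairs of paths obtained so far where the first connects to the second); $\overline{\mathcal{Q}}$ denotes $\widehat{\mathcal{Q}'}$ where $\mathcal{Q}'$ is $\mathcal{Q}$ together with the inverses of its paths. For a path space $\mathcal{S}$, write $x\sim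 y$ if some path of $\mathcal{S}$ has minimum $x$ and maximum $y$; $\mathcal{S}$ is connected if $V(\mathcal{S})$ is a single $\sim$-class; a dipath space $\mathcal{S}$ is connected if $\overline{\mathcal{S}}$ is connected. A dipath space $\mathcal{S}$ is finitary if there is a finite set of paths $\mathcal{Q}$ with $\widehat{\mathcal{Q}}=\mathcal{S}$. Walks: Let $P$ be a path (not necessarily in $\mathcal{P}$). For a closed interval $I$ of $P$ on which $f$ is injective, $f[I]$ denotes the image of $I$ ordered so that $f$ is order-preserving. A walk in $\mathcal{P}$ is a map $f:P\to V(\mathcal{P})$ such that for every $x\in P$: if $x\neq\max P$ there is $y>x$ such that for every $z$ with $x<z\le y$, $f$ is injective on $[x,z]$ and $f[[x,z]]\in\mathcal{P}$; and if $x\neq \min P$ there is $y<x$ such that for every $z$ with $y\le z<x$, $f$ is injective on $[z,x]$ and $f[[z,x]]\in\mathcal{P}$. Let $\mathcal{S}_f$ be the set of all paths $f[I]$, where $I$ is a closed interval of $P$ on which $f$ is injective and $f[I]\in\mathcal{P}$. The space induced by $f$ is $\widehat{f}:=\widehat{\mathcal{S}_f}$. *)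

theory Defs
  imports Main
begin

text \<open>A (linearly ordered) path is represented by its reflexive order relation
  R :: 'a rel; its underlying set is Field R.\<close>

definition is_sup :: "'a rel \<Rightarrow> 'a set \<Rightarrow> 'a \<Rightarrow> bool" where
  "is_sup R Z s \<longleftrightarrow> s \<in> Field R \<and> (\<forall>z\<in>Z. (z, s) \<in> R) \<and>
     (\<forall>u\<in>Field R. (\<forall>z\<in>Z. (z, u) \<in> R) \<longrightarrow> (s, u) \<in> R)"

definition is_inf :: "'a rel \<Rightarrow> 'a set \<Rightarrow> 'a \<Rightarrow> bool" where
  "is_inf R Z s \<longleftrightarrow> s \<in> Field R \<and> (\<forall>z\<in>Z. (s, z) \<in> R) \<and>
     (\<forall>u\<in>Field R. (\<forall>z\<in>Z. (u, z) \<in> R) \<longrightarrow> (u, s) \<in> R)"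

definition complete_in :: "'a rel \<Rightarrow> 'a set \<Rightarrow> bool" where
  "complete_in R Y \<longleftrightarrow> Y \<subseteq> Field R \<and>
     (\<forall>Z. Z \<subseteq> Y \<and> Z \<noteq> {} \<longrightarrow> (\<exists>s\<in>Y. is_sup R Z s) \<and> (\<exists>i\<in>Y. is_inf R Z i))"

definition is_path :: "'a rel \<Rightarrow> bool" where
  "is_path R \<longleftrightarrow> Linear_order R \<and> Field R \<noteq> {} \<and> complete_in R (Field R)"

definition compatible :: "'a rel set \<Rightarrow> bool" where
  "compatible S \<longleftrightarrow> (\<forall>P\<in>S. \<forall>Q\<in>S. complete_in P (Field P \<inter> Field Q))"

definition segment :: "'a rel \<Rightarrow> 'a \<Rightarrow> 'a \<Rightarrow> 'a rel" where
  "segment P x y = Restr P {z. (x, z) \<in> P \<and> (z, y) \<in> P}"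

definition segments :: "'a rel \<Rightarrow> 'a rel set" where
  "segments P = {segment P x y | x y. (x, y) \<in> P}"

definition is_max :: "'a rel \<Rightarrow> 'a \<Rightarrow> bool" where
  "is_max P x \<longleftrightarrow> x \<in> Field P \<and> (\<forall>z\<in>Field P. (z, x) \<in> P)"

definition is_min :: "'a rel \<Rightarrow> 'a \<Rightarrow> bool" where
  "is_min P x \<longleftrightarrow> x \<in> Field P \<and> (\<forall>z\<in>Field P. (x, z) \<in> P)"

definition connects :: "'a rel \<Rightarrow> 'a rel \<Rightarrow> bool" where
  "connects P Q \<longleftrightarrow> (\<exists>x. Field P \<inter> Field Q = {x} \<and> is_max P x \<and> is_min Q x)"

definition concat :: "'a rel \<Rightarrow> 'a rel \<Rightarrow> 'a rel" where
  "concat P Q = P \<union> Q \<union> (Field P \<times> Field Q)"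

definition dipath_space :: "'a rel set \<Rightarrow> bool" where
  "dipath_space S \<longleftrightarrow> (\<forall>P\<in>S. is_path P) \<and> compatible S \<and>
     (\<forall>P\<in>S. segments P \<subseteq> S) \<and>
     (\<forall>P\<in>S. \<forall>Q\<in>S. connects P Q \<longrightarrow> concat P Q \<in> S)"

definition path_space :: "'a rel set \<Rightarrow> bool" where
  "path_space S \<longleftrightarrow> dipath_space S \<and> (\<forall>P\<in>S. converse P \<in> S)"

definition ground :: "'a rel set \<Rightarrow> 'a set" where
  "ground S = (\<Union>P\<in>S. Field P)"

inductive_set hat :: "'a rel set \<Rightarrow> 'a rel set" for Q :: "'a rel set" where
  seg: "P \<in> Q \<Longrightarrow> (x, y) \<in> P \<Longrightarrow> segment P x y \<in> hat Q"
| cat: "P \<in> hat Q \<Longrightarrow> R \<in> hat Q \<Longrightarrow> connects P R \<Longrightarrow> concat P R \<in> hat Q"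

definition bar :: "'a rel set \<Rightarrow> 'a rel set" where
  "bar Q = hat (Q \<union> converse ` Q)"

definition sim :: "'a rel set \<Rightarrow> 'a \<Rightarrow> 'a \<Rightarrow> bool" where
  "sim S x y \<longleftrightarrow> (\<exists>P\<in>S. is_min P x \<and> is_max P y)"

definition path_connected_space :: "'a rel set \<Rightarrow> bool" where
  "path_connected_space S \<longleftrightarrow> ground S \<noteq> {} \<and> (\<forall>x\<in>ground S. \<forall>y\<in>ground S. sim S x y)"

definition dipath_connected :: "'a rel set \<Rightarrow> bool" where
  "dipath_connected S \<longleftrightarrow> path_connected_space (bar S)"

definition finitary :: "'a rel set \<Rightarrow> bool" where
  "finitary S \<longleftrightarrow> (\<exists>Q. finite Q \<and> (\<forall>P\<in>Q. is_path P) \<and> hat Q = S)"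

definition img :: "('b \<Rightarrow> 'a) \<Rightarrow> 'b rel \<Rightarrow> 'a rel" where
  "img f I = map_prod f f ` I"

definition walk :: "'a rel set \<Rightarrow> 'b rel \<Rightarrow> ('b \<Rightarrow> 'a) \<Rightarrow> bool" where
  "walk S P f \<longleftrightarrow> is_path P \<and> (\<forall>x\<in>Field P. f x \<in> ground S) \<and>
    (\<forall>x\<in>Field P.
      (\<not> is_max P x \<longrightarrow> (\<exists>y. (x, y) \<in> P \<and> y \<noteq> x \<and>
          (\<forall>z. (x, z) \<in> P \<and> z \<noteq> x \<and> (z, y) \<in> P \<longrightarrow>
             inj_on f (Field (segment P x z)) \<and> img f (segment P x z) \<in> S))) \<and>
      (\<not> is_min P x \<longrightarrow> (\<exists>y. (y, x) \<in> P \<and> y \<noteq> x \<and>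
          (\<forall>z. (y, z) \<in> P \<and> z \<noteq> x \<and> (z, x) \<in> P \<longrightarrow>
             inj_on f (Field (segment P z x)) \<and> img f (segment P z x) \<in> S))))"

definition walk_paths :: "'a rel set \<Rightarrow> 'b rel \<Rightarrow> ('b \<Rightarrow> 'a) \<Rightarrow> 'a rel set" where
  "walk_paths S P f = {img f (segment P x z) | x z. (x, z) \<in> P \<and>
      inj_on f (Field (segment P x z)) \<and> img f (segment P x z) \<in> S}"

definition induced_space :: "'a rel set \<Rightarrow> 'b rel \<Rightarrow> ('b \<Rightarrow> 'a) \<Rightarrow> 'a rel set" where
  "induced_space S P f = hat (walk_paths S P f)"

end

theory Submission
  imports Defs
begin

definition lin :: "'a rel \<Rightarrow> bool" where
  "lin R \<longleftrightarrow> (\<forall>x\<in>Field R. (x,x)\<in>R) \<and> trans R \<and> antisym R \<and>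
     (\<forall>x\<in>Field R. \<forall>y\<in>Field R. (x,y)\<in>R \<or> (y,x)\<in>R)"

lemma lin_of_path: "is_path R \<Longrightarrow> lin R"
proof -
  assume "is_path R"
  then have "refl_on (Field R) R" "trans R" "antisym R" "total_on (Field R) R"
    unfolding is_path_def linear_order_on_def partial_order_on_def preorder_on_def by auto
  then show "lin R" unfolding lin_def refl_on_def total_on_def by metis
qed

lemma linD:
  assumes "lin R"
  shows "x \<in> Field R \<Longrightarrow> (x,x)\<in>R"
    and "(x,y)\<in>R \<Longrightarrow> (y,z)\<in>R \<Longrightarrow> (x,z)\<in>R"
    and "(x,y)\<in>R \<Longrightarrow> (y,x)\<in>R \<Longrightarrow> x = y"
    and "x \<in> Field R \<Longrightarrow> y \<in> Field R \<Longrightarrow> (x,y)\<notin>R \<Longrightarrow> (y,x)\<in>R"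
  using assms unfolding lin_def trans_def antisym_def by blast+

lemma seg_mem: "(u,v) \<in> segment R x y \<longleftrightarrow> (u,v)\<in>R \<and> (x,u)\<in>R \<and> (u,y)\<in>R \<and> (x,v)\<in>R \<and> (v,y)\<in>R"
  unfolding segment_def by auto

lemma seg_Field:
  assumes "lin R" "(x,y)\<in>R"
  shows "Field (segment R x y) = {z. (x,z)\<in>R \<and> (z,y)\<in>R}"
proof
  show "Field (segment R x y) \<subseteq> {z. (x,z)\<in>R \<and> (z,y)\<in>R}"
    unfolding Field_def segment_def by auto
  show "{z. (x,z)\<in>R \<and> (z,y)\<in>R} \<subseteq> Field (segment R x y)"
  proof
    fix z assume "z \<in> {z. (x,z)\<in>R \<and> (z,y)\<in>R}"
    then have h: "(x,z)\<in>R" "(z,y)\<in>R" by auto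
    then have "(z,z)\<in>R" using linD(1)[OF assms(1)] by (meson FieldI2)
    then have "(z,z) \<in> segment R x y" using h by (simp add: seg_mem)
    then show "z \<in> Field (segment R x y)" by (meson FieldI1)
  qed
qed

lemma seg_lin: assumes "lin R" shows "lin (segment R x y)"
proof -
  have F: "Field (segment R x y) \<subseteq> Field R \<inter> {z. (x,z)\<in>R \<and> (z,y)\<in>R}"
    unfolding segment_def Field_def by auto
  have "\<forall>a\<in>Field (segment R x y). (a,a)\<in>segment R x y"
    using F assms by (auto simp: seg_mem lin_def)
  moreover have "trans (segment R x y)" using assms unfolding lin_def trans_def segment_def by blast
  moreover have "antisym (segment R x y)" using assms unfolding lin_def antisym_def segment_def by blast
  moreover have "\<forall>a\<in>Field (segment R x y). \<forall>b\<in>Field (segment R x y). (a,b)\<in>segment R x y \<or> (b,a)\<in>segment R x y"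
  proof (intro ballI)
    fix a b assume "a \<in> Field (segment R x y)" "b \<in> Field (segment R x y)"
    then have h: "a \<in> Field R" "b \<in> Field R" "(x,a)\<in>R" "(a,y)\<in>R" "(x,b)\<in>R" "(b,y)\<in>R" using F by auto
    then have "(a,b)\<in>R \<or> (b,a)\<in>R" using assms unfolding lin_def by blast
    then show "(a,b)\<in>segment R x y \<or> (b,a)\<in>segment R x y" using h by (auto simp: seg_mem)
  qed
  ultimately show ?thesis unfolding lin_def by blast
qed

lemma seg_minmax:
  assumes "lin R" "(x,y)\<in>R"
  shows "is_min (segment R x y) x" "is_max (segment R x y) y"
proof -
  have xx: "(x,x)\<in>R" "(y,y)\<in>R" using assms linD(1)[OF assms(1)] by (auto intro: FieldI1 FieldI2)
  show "is_min (segment R x y) x" unfolding is_min_def seg_Field[OF assms]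
    using xx assms(2) by (auto simp: seg_mem)
  show "is_max (segment R x y) y" unfolding is_max_def seg_Field[OF assms]
    using xx assms(2) by (auto simp: seg_mem)
qed

lemma seg_seg:
  assumes "lin R" "(u,v) \<in> segment R x y"
  shows "segment (segment R x y) u v = segment R u v"
  using assms linD(2)[OF assms(1)] unfolding segment_def by blast

lemma seg_full:
  assumes "is_min R x" "is_max R y"
  shows "segment R x y = R"
  using assms unfolding segment_def is_min_def is_max_def by (auto intro: FieldI1 FieldI2)

lemma concat_Field: "Field (concat P Q) = Field P \<union> Field Q"
  unfolding concat_def Field_def by auto


lemma pair_eqI: "(\<And>u v. (u,v)\<in>A \<longleftrightarrow> (u,v)\<in>B) \<Longrightarrow> A = B"
  by (rule set_eqI) (metis surj_pair)

lemma concat_mem: "(a,b) \<in> concat P Q \<longleftrightarrow> (a,b)\<in>P \<or> (a,b)\<in>Q \<or> (a \<in> Field P \<and> b \<in> Field Q)"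
  unfolding concat_def by auto

locale cc =
  fixes P Q :: "'a rel" and c :: 'a
  assumes linP: "lin P" and linQ: "lin Q" and int: "Field P \<inter> Field Q = {c}"
    and maxP: "is_max P c" and minQ: "is_min Q c"
begin

lemma cP: "c \<in> Field P" and cQ: "c \<in> Field Q" using int by auto
lemma toc: "z \<in> Field P \<Longrightarrow> (z,c)\<in>P" using maxP unfolding is_max_def by auto
lemma fromc: "z \<in> Field Q \<Longrightarrow> (c,z)\<in>Q" using minQ unfolding is_min_def by auto
lemma both: "z \<in> Field P \<Longrightarrow> z \<in> Field Q \<Longrightarrow> z = c" using int by auto

lemma H1: assumes "v \<in> Field P" "(u,v) \<in> concat P Q" shows "(u,v) \<in> P"
proof -
  have "(u,v)\<in>P \<or> (u,v)\<in>Q \<or> (u \<in> Field P \<and> v \<in> Field Q)" using assms(2) by (simp only: concat_mem)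
  moreover
  { assume 2: "(u,v)\<in>Q"
    have vc: "v = c" using both[OF assms(1) FieldI2[OF 2]] .
    have cu: "(c,u)\<in>Q" using fromc[OF FieldI1[OF 2]] .
    have uc: "(u,c)\<in>Q" using 2 vc by simp
    have "u = c" using linD(3)[OF linQ uc cu] .
    then have "(u,v)\<in>P" using vc linD(1)[OF linP cP] by simp }
  moreover
  { assume 3: "u \<in> Field P" "v \<in> Field Q"
    have "v = c" using both[OF assms(1) 3(2)] .
    then have "(u,v)\<in>P" using toc[OF 3(1)] by simp }
  ultimately show ?thesis by blast
qed

lemma H2: assumes "u \<in> Field Q" "(u,v) \<in> concat P Q" shows "(u,v) \<in> Q"
proof -
  have "(u,v)\<in>P \<or> (u,v)\<in>Q \<or> (u \<in> Field P \<and> v \<in> Field Q)" using assms(2) by (simp only: concat_mem)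
  moreover
  { assume 1: "(u,v)\<in>P"
    have uc: "u = c" using both[OF FieldI1[OF 1] assms(1)] .
    have vc': "(v,c)\<in>P" using toc[OF FieldI2[OF 1]] .
    have cv: "(c,v)\<in>P" using 1 uc by simp
    have "v = c" using linD(3)[OF linP vc' cv] .
    then have "(u,v)\<in>Q" using uc linD(1)[OF linQ cQ] by simp }
  moreover
  { assume 3: "u \<in> Field P" "v \<in> Field Q"
    have "u = c" using both[OF 3(1) assms(1)] .
    then have "(u,v)\<in>Q" using fromc[OF 3(2)] by simp }
  ultimately show ?thesis by blast
qed

lemma concat_lin: "lin (concat P Q)"
proof -
  have F: "Field (concat P Q) = Field P \<union> Field Q" by (rule concat_Field)
  have r: "\<forall>x\<in>Field (concat P Q). (x,x)\<in>concat P Q"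
  proof
    fix x assume "x \<in> Field (concat P Q)"
    then have "x \<in> Field P \<or> x \<in> Field Q" using F by simp
    then show "(x,x)\<in>concat P Q" using linD(1)[OF linP] linD(1)[OF linQ] concat_mem by metis
  qed
  have t: "trans (concat P Q)"
  proof (rule transI)
    fix a b d assume ab: "(a,b) \<in> concat P Q" and bd: "(b,d) \<in> concat P Q"
    have aF: "a \<in> Field P \<union> Field Q" using FieldI1[OF ab] F by simp
    have dF: "d \<in> Field P \<union> Field Q" using FieldI2[OF bd] F by simp
    show "(a,d) \<in> concat P Q"
    proof (cases "d \<in> Field P")
      case True
      then have "(b,d)\<in>P" using H1 bd by blast
      then have "b \<in> Field P" by (meson FieldI1)
      then have "(a,b)\<in>P" using H1 ab by blast
      then show ?thesis using \<open>(b,d)\<in>P\<close> linD(2)[OF linP] by (auto simp: concat_mem)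
    next
      case False
      then have dQ: "d \<in> Field Q" using dF by auto
      show ?thesis
      proof (cases "a \<in> Field Q")
        case True
        then have "(a,b)\<in>Q" using H2 ab by blast
        then have "b \<in> Field Q" by (meson FieldI2)
        then have "(b,d)\<in>Q" using H2 bd by blast
        then show ?thesis using \<open>(a,b)\<in>Q\<close> linD(2)[OF linQ] by (auto simp: concat_mem)
      next
        case False
        then have "a \<in> Field P" using aF by auto
        then show ?thesis using dQ by (auto simp: concat_mem)
      qed
    qed
  qed
  have a: "antisym (concat P Q)"
  proof (rule antisymI)
    fix a b assume ab: "(a,b) \<in> concat P Q" and ba: "(b,a) \<in> concat P Q"
    have aF: "a \<in> Field P \<union> Field Q" using FieldI1[OF ab] F by simp
    have bF: "b \<in> Field P \<union> Field Q" using FieldI2[OF ab] F by simp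
    show "a = b"
    proof (cases "a \<in> Field P \<and> b \<in> Field P")
      case True then show ?thesis using H1 ab ba linD(3)[OF linP] by blast
    next
      case F1: False
      show ?thesis
      proof (cases "a \<in> Field Q \<and> b \<in> Field Q")
        case True then show ?thesis using H2 ab ba linD(3)[OF linQ] by blast
      next
        case False
        then consider "a \<in> Field P" "a \<notin> Field Q" "b \<in> Field Q" "b \<notin> Field P"
          | "b \<in> Field P" "b \<notin> Field Q" "a \<in> Field Q" "a \<notin> Field P" using aF bF F1 by blast
        then show ?thesis
        proof cases
          case 1 then have "(b,a) \<in> Q" using H2 ba by blast
          then show ?thesis using 1 by (meson FieldI2)
        next
          case 2 then have "(a,b) \<in> Q" using H2 ab by blast
          then show ?thesis using 2 by (meson FieldI2)
        qed
      qed
    qed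
  qed
  have to: "\<forall>x\<in>Field (concat P Q). \<forall>y\<in>Field (concat P Q). (x,y)\<in>concat P Q \<or> (y,x)\<in>concat P Q"
  proof (intro ballI)
    fix x y assume "x \<in> Field (concat P Q)" "y \<in> Field (concat P Q)"
    then have "x \<in> Field P \<union> Field Q" "y \<in> Field P \<union> Field Q" using F by auto
    then show "(x,y)\<in>concat P Q \<or> (y,x)\<in>concat P Q"
    proof (elim UnE)
      assume "x \<in> Field P" "y \<in> Field P"
      then show ?thesis using linD(4)[OF linP] concat_mem by metis
    next
      assume "x \<in> Field Q" "y \<in> Field Q"
      then show ?thesis using linD(4)[OF linQ] concat_mem by metis
    next
      assume "x \<in> Field P" "y \<in> Field Q"
      then show ?thesis using concat_mem by metis
    next
      assume "x \<in> Field Q" "y \<in> Field P"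
      then show ?thesis using concat_mem by metis
    qed
  qed
  show ?thesis unfolding lin_def using r t a to by blast
qed

lemma concat_seg1: assumes "(x,y)\<in>P" shows "segment (concat P Q) x y = segment P x y"
proof (rule pair_eqI)
  have yP: "y \<in> Field P" using FieldI2[OF assms] .
  fix u v
  show "(u,v) \<in> segment (concat P Q) x y \<longleftrightarrow> (u,v) \<in> segment P x y"
  proof
    assume "(u,v) \<in> segment (concat P Q) x y"
    then have p: "(u,v)\<in>concat P Q" "(x,u)\<in>concat P Q" "(u,y)\<in>concat P Q"
       "(x,v)\<in>concat P Q" "(v,y)\<in>concat P Q" unfolding seg_mem by auto
    have uy: "(u,y)\<in>P" using H1[OF yP p(3)] .
    have vy: "(v,y)\<in>P" using H1[OF yP p(5)] .
    have "(u,v)\<in>P" using H1[OF FieldI1[OF vy] p(1)] .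
    moreover have "(x,u)\<in>P" using H1[OF FieldI1[OF uy] p(2)] .
    moreover have "(x,v)\<in>P" using H1[OF FieldI1[OF vy] p(4)] .
    ultimately show "(u,v) \<in> segment P x y" using uy vy by (simp add: seg_mem)
  next
    assume "(u,v) \<in> segment P x y"
    then show "(u,v) \<in> segment (concat P Q) x y" unfolding seg_mem concat_mem by blast
  qed
qed

lemma concat_seg2: assumes "(x,y)\<in>Q" shows "segment (concat P Q) x y = segment Q x y"
proof (rule pair_eqI)
  have xQ: "x \<in> Field Q" using FieldI1[OF assms] .
  fix u v
  show "(u,v) \<in> segment (concat P Q) x y \<longleftrightarrow> (u,v) \<in> segment Q x y"
  proof
    assume "(u,v) \<in> segment (concat P Q) x y"
    then have p: "(u,v)\<in>concat P Q" "(x,u)\<in>concat P Q" "(u,y)\<in>concat P Q"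
       "(x,v)\<in>concat P Q" "(v,y)\<in>concat P Q" unfolding seg_mem by auto
    have xu: "(x,u)\<in>Q" using H2[OF xQ p(2)] .
    have xv: "(x,v)\<in>Q" using H2[OF xQ p(4)] .
    have "(u,v)\<in>Q" using H2[OF FieldI2[OF xu] p(1)] .
    moreover have "(u,y)\<in>Q" using H2[OF FieldI2[OF xu] p(3)] .
    moreover have "(v,y)\<in>Q" using H2[OF FieldI2[OF xv] p(5)] .
    ultimately show "(u,v) \<in> segment Q x y" using xu xv by (simp add: seg_mem)
  next
    assume "(u,v) \<in> segment Q x y"
    then show "(u,v) \<in> segment (concat P Q) x y" unfolding seg_mem concat_mem by blast
  qed
qed

lemma concat_seg3:
  assumes xP: "x \<in> Field P" and yQ: "y \<in> Field Q"
  shows "segment (concat P Q) x y = concat (segment P x c) (segment Q c y)"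
    and "connects (segment P x c) (segment Q c y)"
proof -
  have xc: "(x,c)\<in>P" using toc[OF xP] .
  have cy: "(c,y)\<in>Q" using fromc[OF yQ] .
  have FSP: "Field (segment P x c) = {z. (x,z)\<in>P \<and> (z,c)\<in>P}" using seg_Field[OF linP xc] .
  have FSQ: "Field (segment Q c y) = {z. (c,z)\<in>Q \<and> (z,y)\<in>Q}" using seg_Field[OF linQ cy] .
  have FS1: "z \<in> Field (segment P x c) \<Longrightarrow> z \<in> Field P" for z using FSP by (auto intro: FieldI2)
  have FS2: "z \<in> Field (segment Q c y) \<Longrightarrow> z \<in> Field Q" for z using FSQ by (auto intro: FieldI1)
  have M: "(x,z)\<in>concat P Q \<and> (z,y)\<in>concat P Q \<longleftrightarrow> z \<in> Field (segment P x c) \<or> z \<in> Field (segment Q c y)" for z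
  proof
    assume h: "(x,z)\<in>concat P Q \<and> (z,y)\<in>concat P Q"
    have "z \<in> Field (concat P Q)" using h by (meson FieldI2)
    then have "z \<in> Field P \<union> Field Q" by (simp only: concat_Field)
    then show "z \<in> Field (segment P x c) \<or> z \<in> Field (segment Q c y)"
    proof
      assume zP: "z \<in> Field P"
      then have "(x,z)\<in>P" using H1 h by blast
      then show ?thesis using toc[OF zP] FSP by blast
    next
      assume zQ: "z \<in> Field Q"
      then have "(z,y)\<in>Q" using H2 h by blast
      then show ?thesis using fromc[OF zQ] FSQ by blast
    qed
  next
    assume "z \<in> Field (segment P x c) \<or> z \<in> Field (segment Q c y)"
    then show "(x,z)\<in>concat P Q \<and> (z,y)\<in>concat P Q"
    proof
      assume "z \<in> Field (segment P x c)"
      then have "(x,z)\<in>P" using FSP by simp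
      then have "z \<in> Field P" by (meson FieldI2)
      then show ?thesis using yQ \<open>(x,z)\<in>P\<close> concat_mem by metis
    next
      assume "z \<in> Field (segment Q c y)"
      then have "(z,y)\<in>Q" using FSQ by simp
      then have "z \<in> Field Q" by (meson FieldI1)
      then show ?thesis using xP \<open>(z,y)\<in>Q\<close> concat_mem by metis
    qed
  qed
  show "segment (concat P Q) x y = concat (segment P x c) (segment Q c y)"
  proof (rule pair_eqI)
    fix u v
    show "(u,v) \<in> segment (concat P Q) x y \<longleftrightarrow> (u,v) \<in> concat (segment P x c) (segment Q c y)"
    proof
      assume "(u,v) \<in> segment (concat P Q) x y"
      then have uv: "(u,v)\<in>concat P Q" and uM: "u \<in> Field (segment P x c) \<or> u \<in> Field (segment Q c y)"
        and vM: "v \<in> Field (segment P x c) \<or> v \<in> Field (segment Q c y)"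
        using M unfolding seg_mem by blast+
      show "(u,v) \<in> concat (segment P x c) (segment Q c y)"
      proof (cases "v \<in> Field P")
        case True
        then have uvP: "(u,v)\<in>P" using H1 uv by blast
        then have "u \<in> Field P" using FieldI1 by metis
        have "u \<in> Field (segment P x c)"
        proof -
          { assume "u \<in> Field (segment Q c y)"
            then have "u = c" using both[OF \<open>u \<in> Field P\<close> FS2] by blast
            then have ?thesis using FSP xc linD(1)[OF linP cP] by simp }
          then show ?thesis using uM by blast
        qed
        moreover have "v \<in> Field (segment P x c)"
        proof -
          { assume "v \<in> Field (segment Q c y)"
            then have "v = c" using both[OF True FS2] by blast
            then have ?thesis using FSP xc linD(1)[OF linP cP] by simp }
          then show ?thesis using vM by blast
        qed
        ultimately have "u \<in> Field (segment P x c)" "v \<in> Field (segment P x c)" by blast+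
        then have "(u,v) \<in> segment P x c" using uvP FSP by (simp add: seg_mem)
        then show ?thesis unfolding concat_mem by blast
      next
        case False
        then have vQ: "v \<in> Field (segment Q c y)" using vM FS1 by blast
        show ?thesis
        proof (cases "u \<in> Field Q")
          case True
          then have uvQ: "(u,v)\<in>Q" using H2 uv by blast
          have "u \<in> Field (segment Q c y)"
          proof -
            have "(c,u)\<in>Q" using fromc[OF True] .
            moreover have "(v,y)\<in>Q" using vQ FSQ by auto
            ultimately show ?thesis using uvQ linD(2)[OF linQ] FSQ by blast
          qed
          then have "(u,v) \<in> segment Q c y" using uvQ vQ FSQ by (simp add: seg_mem)
          then show ?thesis unfolding concat_mem by blast
        next
          case False
          then have "u \<in> Field (segment P x c)" using uM FS2 by blast
          then show ?thesis using vQ unfolding concat_mem by blast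
        qed
      qed
    next
      assume h: "(u,v) \<in> concat (segment P x c) (segment Q c y)"
      have "u \<in> Field (concat (segment P x c) (segment Q c y))" using h by (meson FieldI1)
      then have uM: "u \<in> Field (segment P x c) \<or> u \<in> Field (segment Q c y)"
        by (simp only: concat_Field Un_iff)
      have "v \<in> Field (concat (segment P x c) (segment Q c y))" using h by (meson FieldI2)
      then have vM: "v \<in> Field (segment P x c) \<or> v \<in> Field (segment Q c y)"
        by (simp only: concat_Field Un_iff)
      have h3: "(u,v) \<in> segment P x c \<or> (u,v) \<in> segment Q c y \<or> (u \<in> Field (segment P x c) \<and> v \<in> Field (segment Q c y))"
        using h by (simp only: concat_mem)
      have "(u,v) \<in> concat P Q"
      proof -
        { assume "(u,v) \<in> segment P x c" then have "(u,v)\<in>P" by (simp add: seg_mem) }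
        moreover
        { assume "(u,v) \<in> segment Q c y" then have "(u,v)\<in>Q" by (simp add: seg_mem) }
        moreover
        { assume "u \<in> Field (segment P x c)" "v \<in> Field (segment Q c y)"
          then have "u \<in> Field P" "v \<in> Field Q" using FS1 FS2 by blast+ }
        ultimately show ?thesis using h3 by (simp only: concat_mem) blast
      qed
      then show "(u,v) \<in> segment (concat P Q) x y" using uM vM M unfolding seg_mem by blast
    qed
  qed
  show "connects (segment P x c) (segment Q c y)"
    unfolding connects_def
  proof (intro exI conjI)
    show "Field (segment P x c) \<inter> Field (segment Q c y) = {c}"
    proof
      show "Field (segment P x c) \<inter> Field (segment Q c y) \<subseteq> {c}"
        using FS1 FS2 both by blast
      have "(c,c)\<in>P" "(c,c)\<in>Q" using linD(1)[OF linP cP] linD(1)[OF linQ cQ] .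
      then show "{c} \<subseteq> Field (segment P x c) \<inter> Field (segment Q c y)" using FSP FSQ xc cy by auto
    qed
    show "is_max (segment P x c) c" using seg_minmax(2)[OF linP xc] .
    show "is_min (segment Q c y) c" using seg_minmax(1)[OF linQ cy] .
  qed
qed

end


lemma connectsE: assumes "connects P Q" obtains c where "Field P \<inter> Field Q = {c}" "is_max P c" "is_min Q c"
  using assms unfolding connects_def by blast

lemma hat_lin: assumes "\<forall>X\<in>Q0. lin X" "R \<in> hat Q0" shows "lin R"
  using assms(2)
proof induction
  case (seg P x y)
  have "lin P" using assms(1) seg(1) by blast
  then show ?case by (rule seg_lin)
next
  case (cat P R)
  obtain c where c: "Field P \<inter> Field R = {c}" "is_max P c" "is_min R c" using connectsE[OF \<open>connects P R\<close>] by blast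
  interpret cc P R c by (unfold_locales; fact \<open>lin P\<close> \<open>lin R\<close> c(1) c(2) c(3))
  show ?case by (rule concat_lin)
qed

lemma hat_seg: assumes "\<forall>X\<in>Q0. lin X" "R \<in> hat Q0" "(x,y) \<in> R" shows "segment R x y \<in> hat Q0"
  using assms(2,3)
proof (induction arbitrary: x y)
  case (seg P u v)
  have lP: "lin P" using assms(1) seg by blast
  have "segment (segment P u v) x y = segment P x y" using seg_seg[OF lP seg(3)] .
  moreover have "(x,y)\<in>P" using seg(3) by (simp add: seg_mem)
  ultimately show ?case using seg(1) hat.seg by metis
next
  case (cat P R)
  obtain c where c: "Field P \<inter> Field R = {c}" "is_max P c" "is_min R c" using connectsE[OF \<open>connects P R\<close>] by blast
  have lP: "lin P" using hat_lin[OF assms(1) \<open>P \<in> hat Q0\<close>] .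
  have lR: "lin R" using hat_lin[OF assms(1) \<open>R \<in> hat Q0\<close>] .
  interpret cc P R c by (unfold_locales; fact lP lR c(1) c(2) c(3))
  have "(x,y)\<in>P \<or> (x,y)\<in>R \<or> (x \<in> Field P \<and> y \<in> Field R)" using cat.prems by (simp only: concat_mem)
  moreover
  { assume h: "(x,y)\<in>P" then have ?case unfolding concat_seg1[OF h] by (rule cat.IH(1)) }
  moreover
  { assume h: "(x,y)\<in>R" then have ?case unfolding concat_seg2[OF h] by (rule cat.IH(2)) }
  moreover
  { assume h: "x \<in> Field P" "y \<in> Field R"
    have "segment P x c \<in> hat Q0" by (rule cat.IH(1)[OF toc[OF h(1)]])
    moreover have "segment R c y \<in> hat Q0" by (rule cat.IH(2)[OF fromc[OF h(2)]])
    ultimately have ?case unfolding concat_seg3(1)[OF h] using concat_seg3(2)[OF h] by (rule hat.cat) }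
  ultimately show ?case by blast
qed

lemma hat_mono: assumes "Q1 \<subseteq> Q2" shows "hat Q1 \<subseteq> hat Q2"
proof
  fix R0 assume "R0 \<in> hat Q1" then show "R0 \<in> hat Q2"
  proof induction
    case (seg P x y) show ?case by (rule hat.seg[OF subsetD[OF assms seg(1)] seg(2)])
  next
    case (cat P R) show ?case by (rule hat.cat[OF cat.IH(1) cat.IH(2) \<open>connects P R\<close>])
  qed
qed

lemma Field_seg_sub: "Field (segment P x y) \<subseteq> Field P"
  unfolding segment_def Field_def by auto

lemma hat_Field: assumes "R0 \<in> hat Q0" shows "Field R0 \<subseteq> ground Q0"
  using assms
proof induction
  case (seg P x y)
  have "Field P \<subseteq> ground Q0" unfolding ground_def using seg(1) by blast
  then show ?case using Field_seg_sub[of P x y] by (rule order_trans[rotated])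
next
  case (cat P R) then show ?case by (simp only: concat_Field Un_subset_iff)
qed

lemma hat_fin: assumes "dipath_space S" "Q0 \<subseteq> S" "R0 \<in> hat Q0"
  shows "\<exists>F. finite F \<and> F \<subseteq> S \<and> Field R0 = \<Union>(Field ` F)"
  using assms(3)
proof induction
  case (seg P x y)
  have "P \<in> S" using assms(2) seg(1) by blast
  then have "segments P \<subseteq> S" using assms(1) unfolding dipath_space_def by blast
  moreover have "segment P x y \<in> segments P" unfolding segments_def using seg(2) by blast
  ultimately have "segment P x y \<in> S" by blast
  then show ?case by (intro exI[of _ "{segment P x y}"]) simp
next
  case (cat P R)
  obtain F1 where F1: "finite F1" "F1 \<subseteq> S" "Field P = \<Union>(Field ` F1)" using cat.IH(1) by blast
  obtain F2 where F2: "finite F2" "F2 \<subseteq> S" "Field R = \<Union>(Field ` F2)" using cat.IH(2) by blast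
  have "Field (concat P R) = \<Union>(Field ` (F1 \<union> F2))" using F1(3) F2(3) by (simp add: concat_Field image_Un)
  then show ?case using F1 F2 by (intro exI[of _ "F1 \<union> F2"]) simp
qed


lemma img_mem: "(p,q) \<in> img f I \<longleftrightarrow> (\<exists>a b. (a,b)\<in>I \<and> p = f a \<and> q = f b)"
  unfolding img_def by force

lemma img_Field: "Field (img f I) = f ` Field I"
  unfolding img_def Field_def by force

lemma img_concat: "img f (concat A B) = concat (img f A) (img f B)"
proof -
  have "map_prod f f ` (Field A \<times> Field B) = f ` Field A \<times> f ` Field B" by (rule map_prod_surj_on) (rule refl)+
  moreover have "Field (map_prod f f ` A) = f ` Field A" "Field (map_prod f f ` B) = f ` Field B"
    using img_Field[of f A] img_Field[of f B] unfolding img_def by blast+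
  ultimately show ?thesis unfolding concat_def img_def by (simp add: image_Un)
qed

lemma img_inj_mem:
  assumes "inj_on f (Field I)" "a \<in> Field I" "b \<in> Field I"
  shows "(f a, f b) \<in> img f I \<longleftrightarrow> (a,b) \<in> I"
proof
  assume "(f a, f b) \<in> img f I"
  then obtain u v where uv: "(u,v)\<in>I" "f a = f u" "f b = f v" unfolding img_mem by blast
  have "u = a" using inj_onD[OF assms(1) uv(2)[symmetric] FieldI1[OF uv(1)] assms(2)] .
  moreover have "v = b" using inj_onD[OF assms(1) uv(3)[symmetric] FieldI2[OF uv(1)] assms(3)] .
  ultimately show "(a,b)\<in>I" using uv(1) by simp
next
  assume "(a,b)\<in>I" then show "(f a, f b) \<in> img f I" unfolding img_mem by blast
qed

lemma img_minmax:
  assumes "lin P" "(x,z)\<in>P"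
  shows "is_min (img f (segment P x z)) (f x)" "is_max (img f (segment P x z)) (f z)"
proof -
  have m: "is_min (segment P x z) x" "is_max (segment P x z) z" using seg_minmax[OF assms] by blast+
  show "is_min (img f (segment P x z)) (f x)"
    using m(1) unfolding is_min_def img_Field img_mem by blast
  show "is_max (img f (segment P x z)) (f z)"
    using m(2) unfolding is_max_def img_Field img_mem by blast
qed

lemma img_seg:
  assumes "lin I" "inj_on f (Field I)" "(a,b) \<in> I"
  shows "segment (img f I) (f a) (f b) = img f (segment I a b)"
proof (rule pair_eqI)
  fix p q
  have aF: "a \<in> Field I" and bF: "b \<in> Field I" using assms(3) by (auto intro: FieldI1 FieldI2)
  show "(p,q) \<in> segment (img f I) (f a) (f b) \<longleftrightarrow> (p,q) \<in> img f (segment I a b)"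
  proof
    assume "(p,q) \<in> segment (img f I) (f a) (f b)"
    then have h: "(p,q)\<in>img f I" "(f a, p) \<in> img f I" "(p, f b)\<in>img f I" "(f a, q)\<in>img f I" "(q, f b)\<in>img f I"
      by (simp_all add: seg_mem)
    obtain u v where uv: "(u,v)\<in>I" "p = f u" "q = f v" using h(1) unfolding img_mem by blast
    have uF: "u \<in> Field I" using FieldI1[OF uv(1)] .
    have vF: "v \<in> Field I" using FieldI2[OF uv(1)] .
    have "(a,u)\<in>I" "(u,b)\<in>I" "(a,v)\<in>I" "(v,b)\<in>I"
      using h(2-5) img_inj_mem[OF assms(2)] aF bF uF vF uv(2,3) by auto
    then have "(u,v) \<in> segment I a b" using uv(1) by (simp add: seg_mem)
    then show "(p,q) \<in> img f (segment I a b)" using uv(2,3) unfolding img_mem by blast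
  next
    assume "(p,q) \<in> img f (segment I a b)"
    then obtain u v where uv: "(u,v) \<in> segment I a b" "p = f u" "q = f v" unfolding img_mem by blast
    then have "(u,v)\<in>I" "(a,u)\<in>I" "(u,b)\<in>I" "(a,v)\<in>I" "(v,b)\<in>I" by (simp_all add: seg_mem)
    then show "(p,q) \<in> segment (img f I) (f a) (f b)" using uv(2,3) unfolding seg_mem img_mem by blast
  qed
qed

lemma seg_split:
  assumes "lin P" "(x,v)\<in>P" "(v,z)\<in>P"
  shows "segment P x z = concat (segment P x v) (segment P v z)"
proof (rule pair_eqI)
  fix p q
  have FA: "Field (segment P x v) = {t. (x,t)\<in>P \<and> (t,v)\<in>P}" using seg_Field[OF assms(1,2)] .
  have FB: "Field (segment P v z) = {t. (v,t)\<in>P \<and> (t,z)\<in>P}" using seg_Field[OF assms(1,3)] .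
  note tr = linD(2)[OF assms(1)]
  show "(p,q) \<in> segment P x z \<longleftrightarrow> (p,q) \<in> concat (segment P x v) (segment P v z)"
  proof
    assume "(p,q) \<in> segment P x z"
    then have h: "(p,q)\<in>P" "(x,p)\<in>P" "(p,z)\<in>P" "(x,q)\<in>P" "(q,z)\<in>P" by (simp_all add: seg_mem)
    have vF: "v \<in> Field P" using FieldI2[OF assms(2)] .
    have pF: "p \<in> Field P" using FieldI1[OF h(1)] .
    have qF: "q \<in> Field P" using FieldI2[OF h(1)] .
    show "(p,q) \<in> concat (segment P x v) (segment P v z)"
    proof (cases "(q,v)\<in>P")
      case True
      then have "(p,q) \<in> segment P x v" using h tr[OF h(1) True] by (simp add: seg_mem)
      then show ?thesis unfolding concat_mem by blast
    next
      case False
      then have vq: "(v,q)\<in>P" using linD(4)[OF assms(1) qF vF] by blast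
      show ?thesis
      proof (cases "(v,p)\<in>P")
        case True
        then have "(p,q) \<in> segment P v z" using h vq by (simp add: seg_mem)
        then show ?thesis unfolding concat_mem by blast
      next
        case False
        then have pv: "(p,v)\<in>P" using linD(4)[OF assms(1) vF pF] by blast
        have "p \<in> Field (segment P x v)" using FA h(2) pv by simp
        moreover have "q \<in> Field (segment P v z)" using FB h(5) vq by simp
        ultimately show ?thesis unfolding concat_mem by blast
      qed
    qed
  next
    assume "(p,q) \<in> concat (segment P x v) (segment P v z)"
    then consider "(p,q) \<in> segment P x v" | "(p,q) \<in> segment P v z"
      | "p \<in> Field (segment P x v)" "q \<in> Field (segment P v z)" unfolding concat_mem by blast
    then show "(p,q) \<in> segment P x z"
    proof cases
      case 1
      then have h: "(p,q)\<in>P" "(x,p)\<in>P" "(p,v)\<in>P" "(x,q)\<in>P" "(q,v)\<in>P" by (simp_all add: seg_mem)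
      then show ?thesis using tr[OF h(3) assms(3)] tr[OF h(5) assms(3)] by (simp add: seg_mem)
    next
      case 2
      then have h: "(p,q)\<in>P" "(v,p)\<in>P" "(p,z)\<in>P" "(v,q)\<in>P" "(q,z)\<in>P" by (simp_all add: seg_mem)
      then show ?thesis using tr[OF assms(2) h(2)] tr[OF assms(2) h(4)] by (simp add: seg_mem)
    next
      case 3
      then have h: "(x,p)\<in>P" "(p,v)\<in>P" "(v,q)\<in>P" "(q,z)\<in>P" using FA FB by auto
      then show ?thesis using tr[OF h(1) h(2)] tr[OF h(2) h(3)] tr[OF h(3) h(4)] tr[OF h(1) tr[OF h(2) h(3)]]
          tr[OF tr[OF h(2) h(3)] h(4)] by (simp add: seg_mem)
    qed
  qed
qed


lemma in_hat: assumes "X \<in> Q0" "is_min X p" "is_max X q" shows "X \<in> hat Q0"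
proof -
  have "q \<in> Field X" using assms(3) unfolding is_max_def by blast
  then have pq: "(p,q) \<in> X" using assms(2) unfolding is_min_def by blast
  have "segment X p q \<in> hat Q0" by (rule hat.seg[OF assms(1) pq])
  then show ?thesis using seg_full[OF assms(2,3)] by simp
qed

lemma concat_min: "is_min A p \<Longrightarrow> is_min (concat A B) p"
  unfolding is_min_def concat_Field concat_mem by blast

lemma concat_max: "is_max B q \<Longrightarrow> is_max (concat A B) q"
  unfolding is_max_def concat_Field concat_mem by blast

lemma seg_single: assumes "lin X" "x \<in> Field X" shows "segment X x x = {(x,x)}"
proof (rule pair_eqI)
  fix u v
  show "(u,v) \<in> segment X x x \<longleftrightarrow> (u,v) \<in> {(x,x)}"
    using linD(3)[OF assms(1)] linD(1)[OF assms] unfolding seg_mem by blast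
qed

definition good :: "'a rel set \<Rightarrow> 'b rel \<Rightarrow> ('b \<Rightarrow> 'a) \<Rightarrow> 'b \<Rightarrow> 'b \<Rightarrow> bool" where
  "good S P f v w \<longleftrightarrow> (v,w)\<in>P \<and> inj_on f (Field (segment P v w)) \<and> img f (segment P v w) \<in> S"

inductive reach :: "'a rel set \<Rightarrow> 'b rel \<Rightarrow> ('b \<Rightarrow> 'a) \<Rightarrow> 'b \<Rightarrow> 'b \<Rightarrow> ('b \<times> 'b) set \<Rightarrow> bool"
  for S P f where
  r0: "good S P f a a \<Longrightarrow> reach S P f a a {(a,a)}"
| r1: "reach S P f a v Q \<Longrightarrow> good S P f v w \<Longrightarrow> reach S P f a w (insert (v,w) Q)"

locale wk =
  fixes S :: "'a rel set" and P :: "'b rel" and f :: "'b \<Rightarrow> 'a"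
  assumes dS: "dipath_space S" and wlk: "walk S P f"
begin

lemma pathP: "is_path P" using wlk unfolding walk_def by (rule conjunct1)
lemma linP: "lin P" using lin_of_path[OF pathP] .
lemma pathS: assumes "X \<in> S" shows "is_path X"
proof -
  have "\<forall>P\<in>S. is_path P" using dS unfolding dipath_space_def by (rule conjunct1)
  then show ?thesis using assms by (rule bspec)
qed
lemma linS: "X \<in> S \<Longrightarrow> lin X" by (rule lin_of_path[OF pathS])
lemma segS: assumes "X \<in> S" "(x,y) \<in> X" shows "segment X x y \<in> S"
proof -
  have "\<forall>P\<in>S. segments P \<subseteq> S" using dS unfolding dipath_space_def by (elim conjE)
  then have "segments X \<subseteq> S" using assms(1) by (rule bspec)
  moreover have "segment X x y \<in> segments X" unfolding segments_def using assms(2) by blast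
  ultimately show ?thesis by (rule subsetD)
qed
lemma compS: assumes "X \<in> S" "Y \<in> S" shows "complete_in X (Field X \<inter> Field Y)"
proof -
  have "compatible S" using dS unfolding dipath_space_def by (elim conjE)
  then show ?thesis using assms unfolding compatible_def by simp
qed

abbreviation "W \<equiv> walk_paths S P f"

lemma W_char: "X \<in> W \<longleftrightarrow> (\<exists>x z. X = img f (segment P x z) \<and> good S P f x z)"
  by (simp add: walk_paths_def good_def)

lemma W_S: "W \<subseteq> S"
proof
  fix X assume "X \<in> W"
  then obtain x z where "X = img f (segment P x z)" "good S P f x z" unfolding W_char by blast
  then show "X \<in> S" unfolding good_def by simp
qed
lemma W_lin: "\<forall>X\<in>W. lin X" using W_S linS by blast

lemma good_refl: assumes "a \<in> Field P" shows "good S P f a a"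
proof -
  have "f a \<in> ground S" using wlk assms unfolding walk_def by blast
  then obtain X where X: "X \<in> S" "f a \<in> Field X" unfolding ground_def by blast
  have "(f a, f a) \<in> X" using linD(1)[OF linS[OF X(1)] X(2)] .
  then have "segment X (f a) (f a) \<in> S" using segS X(1) by blast
  then have 1: "{(f a, f a)} \<in> S" using seg_single[OF linS[OF X(1)] X(2)] by simp
  have 2: "segment P a a = {(a,a)}" using seg_single[OF linP assms] .
  have "(a,a) \<in> P" using linD(1)[OF linP assms] .
  then show ?thesis unfolding good_def 2 img_def using 1 by simp
qed

lemma good_sub:
  assumes g: "good S P f v w" and h: "(v,x)\<in>P" "(x,z)\<in>P" "(z,w)\<in>P"
  shows "img f (segment P x z) = segment (img f (segment P v w)) (f x) (f z)"
    and "(f x, f z) \<in> img f (segment P v w)"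
    and "good S P f x z"
proof -
  note tr = linD(2)[OF linP]
  have vw: "(v,w)\<in>P" and inj: "inj_on f (Field (segment P v w))" and inS: "img f (segment P v w) \<in> S"
    using g unfolding good_def by blast+
  have xz: "(x,z) \<in> segment P v w" using h tr[OF h(1) h(2)] tr[OF h(2) h(3)] tr[OF h(1) tr[OF h(2) h(3)]]
    by (simp add: seg_mem)
  have "segment (img f (segment P v w)) (f x) (f z) = img f (segment (segment P v w) x z)"
    by (rule img_seg[OF seg_lin[OF linP] inj xz])
  also have "\<dots> = img f (segment P x z)" using seg_seg[OF linP xz] by simp
  finally show 1: "img f (segment P x z) = segment (img f (segment P v w)) (f x) (f z)" by simp
  show 2: "(f x, f z) \<in> img f (segment P v w)" using xz unfolding img_mem by blast
  have sub: "Field (segment P x z) \<subseteq> Field (segment P v w)"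
  proof
    fix t assume "t \<in> Field (segment P x z)"
    then have t: "(x,t)\<in>P" "(t,z)\<in>P" using seg_Field[OF linP h(2)] by auto
    have "(v,t)\<in>P" using tr[OF h(1) t(1)] .
    moreover have "(t,w)\<in>P" using tr[OF t(2) h(3)] .
    ultimately show "t \<in> Field (segment P v w)" using seg_Field[OF linP vw] by simp
  qed
  show "good S P f x z" unfolding good_def
    using h(2) inj_on_subset[OF inj sub] 1 segS[OF inS 2] by simp
qed

lemma right_cond: assumes "x \<in> Field P" "\<not> is_max P x"
  shows "\<exists>y. (x,y)\<in>P \<and> y \<noteq> x \<and> (\<forall>z. (x,z)\<in>P \<and> z \<noteq> x \<and> (z,y)\<in>P \<longrightarrow> good S P f x z)"
  using wlk assms unfolding walk_def good_def by blast

lemma left_cond: assumes "x \<in> Field P" "\<not> is_min P x"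
  shows "\<exists>y. (y,x)\<in>P \<and> y \<noteq> x \<and> (\<forall>z. (y,z)\<in>P \<and> z \<noteq> x \<and> (z,x)\<in>P \<longrightarrow> good S P f z x)"
  using wlk assms unfolding walk_def good_def by blast

lemma reach_props: assumes "reach S P f a t Q"
  shows "(a,t)\<in>P \<and> finite Q \<and> (\<forall>p\<in>Q. good S P f (fst p) (snd p))"
  using assms
proof induction
  case (r0 a) then show ?case unfolding good_def by simp
next
  case (r1 a v Q w)
  have "(a,v)\<in>P" "(v,w)\<in>P" using r1 unfolding good_def by blast+
  then have "(a,w)\<in>P" by (rule linD(2)[OF linP])
  then show ?case using r1 by simp
qed

end


context wk begin

lemma complP: assumes "Z \<subseteq> Field P" "Z \<noteq> {}" shows "\<exists>s\<in>Field P. is_sup P Z s"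
proof -
  have "complete_in P (Field P)" using pathP unfolding is_path_def by blast
  then show ?thesis using assms unfolding complete_in_def by blast
qed

lemma reach_all: assumes ab: "(a,b)\<in>P" shows "\<exists>Q. reach S P f a b Q"
proof -
  note tr = linD(2)[OF linP] and asy = linD(3)[OF linP] and tot = linD(4)[OF linP]
  have aF: "a \<in> Field P" using FieldI1[OF ab] .
  have bF: "b \<in> Field P" using FieldI2[OF ab] .
  define G where "G = {t. (t,b)\<in>P \<and> (\<exists>Q. reach S P f a t Q)}"
  have r0a: "reach S P f a a {(a,a)}" by (rule r0[OF good_refl[OF aF]])
  have aG: "a \<in> G" unfolding G_def using ab r0a by blast
  have GF: "G \<subseteq> Field P" unfolding G_def by (auto intro: FieldI1)
  obtain s where sF: "s \<in> Field P" and sup: "is_sup P G s" using complP[OF GF] aG by blast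
  have ub: "\<And>g. g \<in> G \<Longrightarrow> (g,s)\<in>P" using sup unfolding is_sup_def by blast
  have least: "\<And>u. u \<in> Field P \<Longrightarrow> (\<forall>g\<in>G. (g,u)\<in>P) \<Longrightarrow> (s,u)\<in>P"
    using sup unfolding is_sup_def by blast
  have sb: "(s,b)\<in>P" using least[OF bF] unfolding G_def by blast
  have as: "(a,s)\<in>P" using ub[OF aG] .
  have sR: "\<exists>Q. reach S P f a s Q"
  proof (cases "s = a")
    case True then show ?thesis using r0a by blast
  next
    case False
    have "\<not> is_min P s"
    proof
      assume "is_min P s" then have "(s,a)\<in>P" using aF unfolding is_min_def by blast
      then show False using asy[OF as] False by blast
    qed
    then obtain y where y: "(y,s)\<in>P" "y \<noteq> s"
      and yc: "\<And>z. (y,z)\<in>P \<Longrightarrow> z \<noteq> s \<Longrightarrow> (z,s)\<in>P \<Longrightarrow> good S P f z s"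
      using left_cond[OF sF] by blast
    have yF: "y \<in> Field P" using FieldI1[OF y(1)] .
    show ?thesis
    proof (cases "(y,a)\<in>P")
      case True
      have "good S P f a s" using yc[OF True] False as by blast
      then show ?thesis using r1[OF r0a] by (intro exI)
    next
      case ya: False
      have "\<not> (\<forall>g\<in>G. (g,y)\<in>P)"
      proof
        assume "\<forall>g\<in>G. (g,y)\<in>P"
        then have "(s,y)\<in>P" using least[OF yF] by blast
        then show False using asy[OF y(1)] y(2) by blast
      qed
      then obtain g where gG: "g \<in> G" and gy: "(g,y)\<notin>P" by blast
      have gF: "g \<in> Field P" using gG GF by blast
      have yg: "(y,g)\<in>P" using tot[OF gF yF gy] .
      obtain Q where Q: "reach S P f a g Q" using gG unfolding G_def by blast
      show ?thesis
      proof (cases "g = s")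
        case True then show ?thesis using Q by blast
      next
        case False
        have "good S P f g s" using yc[OF yg False ub[OF gG]] .
        then show ?thesis using r1[OF Q] by (intro exI)
      qed
    qed
  qed
  have "s = b"
  proof (rule ccontr)
    assume nb: "s \<noteq> b"
    have "\<not> is_max P s"
    proof
      assume "is_max P s" then have "(b,s)\<in>P" using bF unfolding is_max_def by blast
      then show False using asy[OF sb] nb by blast
    qed
    then obtain y where y: "(s,y)\<in>P" "y \<noteq> s"
      and yc: "\<And>z. (s,z)\<in>P \<Longrightarrow> z \<noteq> s \<Longrightarrow> (z,y)\<in>P \<Longrightarrow> good S P f s z"
      using right_cond[OF sF] by blast
    have yF: "y \<in> Field P" using FieldI2[OF y(1)] .
    define y' where "y' = (if (y,b)\<in>P then y else b)"
    have sy': "(s,y')\<in>P" unfolding y'_def using y(1) sb by simp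
    have y'n: "y' \<noteq> s" unfolding y'_def using y(2) nb by simp
    have y'y: "(y',y)\<in>P" unfolding y'_def using linD(1)[OF linP yF] tot[OF yF bF] by simp
    have y'b: "(y',b)\<in>P" unfolding y'_def using linD(1)[OF linP bF] by simp
    have gs: "good S P f s y'" using yc[OF sy' y'n y'y] .
    obtain Q where Qs: "reach S P f a s Q" using sR by blast
    have "reach S P f a y' (insert (s,y') Q)" by (rule r1[OF Qs gs])
    then have "y' \<in> G" unfolding G_def using y'b by blast
    then have "(y',s)\<in>P" by (rule ub)
    then show False using asy[OF sy'] y'n by blast
  qed
  then show ?thesis using sR by simp
qed

definition Qp :: "('b \<times> 'b) set \<Rightarrow> 'a rel set" where
  "Qp Q = (\<lambda>p. img f (segment P (fst p) (snd p))) ` Q"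

lemma claimD:
  assumes "reach S P f a t Q"
  shows "(a,x)\<in>P \<Longrightarrow> (x,z)\<in>P \<Longrightarrow> (z,t)\<in>P \<Longrightarrow> inj_on f (Field (segment P x z))
     \<Longrightarrow> img f (segment P x z) \<in> hat (Qp Q)"
  using assms
proof (induction arbitrary: x z)
  case (r0 a)
  have "a = x" using linD(3)[OF linP r0.prems(1) linD(2)[OF linP r0.prems(2) r0.prems(3)]] .
  moreover have "z = a" using linD(3)[OF linP r0.prems(3) linD(2)[OF linP r0.prems(1) r0.prems(2)]] .
  moreover have "img f (segment P a a) \<in> Qp {(a,a)}" unfolding Qp_def by simp
  moreover have aa: "(a,a)\<in>P" using r0.hyps unfolding good_def by blast
  ultimately show ?case using in_hat[OF _ img_minmax[OF linP aa]] by blast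
next
  case (r1 a v Q w)
  note tr = linD(2)[OF linP] and tot = linD(4)[OF linP]
  have mono: "hat (Qp Q) \<subseteq> hat (Qp (insert (v,w) Q))" by (rule hat_mono) (simp add: Qp_def image_mono subset_insertI)
  have vwQ: "img f (segment P v w) \<in> Qp (insert (v,w) Q)" unfolding Qp_def by simp
  have xF: "x \<in> Field P" using FieldI1[OF r1.prems(2)] .
  have zF: "z \<in> Field P" using FieldI2[OF r1.prems(2)] .
  have "(a,v)\<in>P" using reach_props[OF r1.hyps(1)] by (elim conjE)
  then have vF: "v \<in> Field P" by (rule FieldI2)
  have sub_case: "img f (segment P x' z') \<in> hat (Qp (insert (v,w) Q))"
    if h: "(v,x')\<in>P" "(x',z')\<in>P" "(z',w)\<in>P" for x' z'
  proof -
    have "segment (img f (segment P v w)) (f x') (f z') \<in> hat (Qp (insert (v,w) Q))"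
      by (rule hat.seg[OF vwQ good_sub(2)[OF r1.hyps(2) h]])
    then show ?thesis using good_sub(1)[OF r1.hyps(2) h] by simp
  qed
  show ?case
  proof (cases "(z,v)\<in>P")
    case True
    show ?thesis using subsetD[OF mono r1.IH[OF r1.prems(1,2) True r1.prems(4)]] .
  next
    case False
    then have vz: "(v,z)\<in>P" using tot[OF zF vF] by blast
    show ?thesis
    proof (cases "(v,x)\<in>P")
      case True
      show ?thesis using sub_case[OF True r1.prems(2) r1.prems(3)] .
    next
      case False
      then have xv: "(x,v)\<in>P" using tot[OF vF xF] by blast
      have split: "segment P x z = concat (segment P x v) (segment P v z)" by (rule seg_split[OF linP xv vz])
      have FA: "Field (segment P x v) = {t. (x,t)\<in>P \<and> (t,v)\<in>P}" using seg_Field[OF linP xv] .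
      have FB: "Field (segment P v z) = {t. (v,t)\<in>P \<and> (t,z)\<in>P}" using seg_Field[OF linP vz] .
      have FZ: "Field (segment P x z) = Field (segment P x v) \<union> Field (segment P v z)"
        unfolding split by (rule concat_Field)
      have inj: "inj_on f (Field (segment P x z))" using r1.prems(4) .
      have injA: "inj_on f (Field (segment P x v))" by (rule inj_on_subset[OF inj]) (simp add: FZ)
      have A: "img f (segment P x v) \<in> hat (Qp (insert (v,w) Q))"
        using subsetD[OF mono r1.IH[OF r1.prems(1) xv linD(1)[OF linP vF] injA]] .
      have B: "img f (segment P v z) \<in> hat (Qp (insert (v,w) Q))"
        using sub_case[OF linD(1)[OF linP vF] vz r1.prems(3)] .
      have con: "connects (img f (segment P x v)) (img f (segment P v z))"
        unfolding connects_def
      proof (intro exI conjI)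
        show "is_max (img f (segment P x v)) (f v)" using img_minmax(2)[OF linP xv] .
        show "is_min (img f (segment P v z)) (f v)" using img_minmax(1)[OF linP vz] .
        show "Field (img f (segment P x v)) \<inter> Field (img f (segment P v z)) = {f v}"
        proof
          show "Field (img f (segment P x v)) \<inter> Field (img f (segment P v z)) \<subseteq> {f v}"
          proof
            fix p assume "p \<in> Field (img f (segment P x v)) \<inter> Field (img f (segment P v z))"
            then obtain t1 t2 where t: "t1 \<in> Field (segment P x v)" "t2 \<in> Field (segment P v z)"
              "p = f t1" "p = f t2" unfolding img_Field by blast
            have "t1 \<in> Field (segment P x z)" "t2 \<in> Field (segment P x z)" using t(1,2) FZ by blast+
            moreover have "f t1 = f t2" using t(3,4) by simp
            ultimately have "t1 = t2" using inj_onD[OF inj] by blast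
            then have "t1 \<in> Field (segment P x v) \<inter> Field (segment P v z)" using t by blast
            then have "(t1,v)\<in>P" "(v,t1)\<in>P" using FA FB by auto
            then have "t1 = v" by (rule linD(3)[OF linP])
            then show "p \<in> {f v}" using t by simp
          qed
          have "f v \<in> Field (img f (segment P x v))" using img_minmax(2)[OF linP xv] unfolding is_max_def by (rule conjunct1)
          moreover have "f v \<in> Field (img f (segment P v z))" using img_minmax(1)[OF linP vz] unfolding is_min_def by (rule conjunct1)
          ultimately show "{f v} \<subseteq> Field (img f (segment P x v)) \<inter> Field (img f (segment P v z))" by simp
        qed
      qed
      have "concat (img f (segment P x v)) (img f (segment P v z)) \<in> hat (Qp (insert (v,w) Q))"
        by (rule hat.cat[OF A B con])
      then show ?thesis unfolding split img_concat .
    qed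
  qed
qed

end


lemma complete_max: assumes "complete_in T Z" "Z \<noteq> {}" shows "\<exists>s\<in>Z. \<forall>z\<in>Z. (z,s)\<in>T"
proof -
  obtain s where "s \<in> Z" "is_sup T Z s" using assms unfolding complete_in_def by blast
  then show ?thesis unfolding is_sup_def by blast
qed

lemma maxfin:
  assumes T: "lin T" and "finite F"
  shows "(\<forall>G\<in>F. complete_in T (Field T \<inter> Field G)) \<Longrightarrow> Field T \<inter> \<Union>(Field ` F) \<noteq> {} \<Longrightarrow>
    \<exists>m\<in>Field T \<inter> \<Union>(Field ` F). \<forall>z\<in>Field T \<inter> \<Union>(Field ` F). (z,m)\<in>T"
  using assms(2)
proof (induction F rule: finite_induct)
  case empty then show ?case by simp
next
  case (insert G F)
  have eq: "Field T \<inter> \<Union>(Field ` insert G F) = (Field T \<inter> Field G) \<union> (Field T \<inter> \<Union>(Field ` F))" by auto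
  have cG: "complete_in T (Field T \<inter> Field G)" using insert.prems(1) by simp
  have cF: "\<forall>G\<in>F. complete_in T (Field T \<inter> Field G)" using insert.prems(1) by simp
  show ?case
  proof (cases "Field T \<inter> Field G = {}")
    case True
    then have ne: "Field T \<inter> \<Union>(Field ` F) \<noteq> {}" using insert.prems(2) eq by simp
    show ?thesis using insert.IH[OF cF ne] eq True by simp
  next
    case False
    obtain sA where sA: "sA \<in> Field T \<inter> Field G" "\<forall>z\<in>Field T \<inter> Field G. (z,sA)\<in>T"
      using complete_max[OF cG False] by blast
    show ?thesis
    proof (cases "Field T \<inter> \<Union>(Field ` F) = {}")
      case True
      then have "Field T \<inter> \<Union>(Field ` insert G F) = Field T \<inter> Field G" using eq by simp
      then show ?thesis using sA by (intro bexI[of _ sA]) simp_all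
    next
      case False
      obtain mB where mB: "mB \<in> Field T \<inter> \<Union>(Field ` F)" "\<forall>z\<in>Field T \<inter> \<Union>(Field ` F). (z,mB)\<in>T"
        using insert.IH[OF cF False] by blast
      have sAF: "sA \<in> Field T" and mBF: "mB \<in> Field T" using sA mB by blast+
      show ?thesis
      proof (cases "(sA,mB)\<in>T")
        case True
        have "\<forall>z\<in>Field T \<inter> \<Union>(Field ` insert G F). (z,mB)\<in>T"
        proof
          fix z assume "z \<in> Field T \<inter> \<Union>(Field ` insert G F)"
          then have "z \<in> Field T \<inter> Field G \<or> z \<in> Field T \<inter> \<Union>(Field ` F)" using eq by blast
          then show "(z,mB)\<in>T"
          proof
            assume "z \<in> Field T \<inter> Field G"
            then have "(z,sA)\<in>T" using sA(2) by blast
            then show ?thesis using linD(2)[OF T _ True] by blast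
          next
            assume "z \<in> Field T \<inter> \<Union>(Field ` F)" then show ?thesis using mB(2) by blast
          qed
        qed
        then show ?thesis using mB(1) eq by blast
      next
        case False
        then have ms: "(mB,sA)\<in>T" using linD(4)[OF T sAF mBF] by blast
        have "\<forall>z\<in>Field T \<inter> \<Union>(Field ` insert G F). (z,sA)\<in>T"
        proof
          fix z assume "z \<in> Field T \<inter> \<Union>(Field ` insert G F)"
          then have "z \<in> Field T \<inter> Field G \<or> z \<in> Field T \<inter> \<Union>(Field ` F)" using eq by blast
          then show "(z,sA)\<in>T"
          proof
            assume "z \<in> Field T \<inter> Field G" then show ?thesis using sA(2) by blast
          next
            assume "z \<in> Field T \<inter> \<Union>(Field ` F)"
            then have "(z,mB)\<in>T" using mB(2) by blast
            then show ?thesis using linD(2)[OF T _ ms] by blast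
          qed
        qed
        then show ?thesis using sA(1) eq by blast
      qed
    qed
  qed
qed

context wk begin

lemma minmaxP: obtains m0 M0 where "is_min P m0" "is_max P M0"
proof -
  have ne: "Field P \<noteq> {}" using pathP unfolding is_path_def by blast
  have "complete_in P (Field P)" using pathP unfolding is_path_def by blast
  then obtain s i where "is_sup P (Field P) s" "is_inf P (Field P) i"
    using ne unfolding complete_in_def by blast
  then have "is_max P s" "is_min P i" unfolding is_sup_def is_inf_def is_max_def is_min_def by blast+
  then show ?thesis using that by blast
qed

lemma finitary_part: "finitary (hat W)"
proof -
  obtain m0 M0 where m0: "is_min P m0" and M0: "is_max P M0" using minmaxP by blast
  have "M0 \<in> Field P" using M0 unfolding is_max_def by blast
  then have mM: "(m0,M0)\<in>P" using m0 unfolding is_min_def by blast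
  obtain Q0 where Q0: "reach S P f m0 M0 Q0" using reach_all[OF mM] by blast
  have props: "finite Q0" "\<forall>p\<in>Q0. good S P f (fst p) (snd p)" using reach_props[OF Q0] by blast+
  have fin: "finite (Qp Q0)" unfolding Qp_def using props(1) by simp
  have QW: "Qp Q0 \<subseteq> W"
  proof
    fix X assume "X \<in> Qp Q0"
    then obtain p where "p \<in> Q0" "X = img f (segment P (fst p) (snd p))" unfolding Qp_def by blast
    then show "X \<in> W" unfolding W_char using props(2) by blast
  qed
  have paths: "\<forall>X\<in>Qp Q0. is_path X" using QW W_S pathS by blast
  have "hat (Qp Q0) = hat W"
  proof
    show "hat (Qp Q0) \<subseteq> hat W" by (rule hat_mono[OF QW])
    show "hat W \<subseteq> hat (Qp Q0)"
    proof
      fix R0 assume "R0 \<in> hat W" then show "R0 \<in> hat (Qp Q0)"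
      proof induction
        case (seg X p q)
        obtain x z where X: "X = img f (segment P x z)" and g: "good S P f x z" using seg(1) unfolding W_char by blast
        obtain x' z' where xz': "(x',z') \<in> segment P x z" "p = f x'" "q = f z'"
          using seg(2) unfolding X img_mem by blast
        have h: "(x,x')\<in>P" "(x',z')\<in>P" "(z',z)\<in>P" using xz'(1) by (simp_all add: seg_mem)
        have eq: "segment X p q = img f (segment P x' z')" using good_sub(1)[OF g h] X xz'(2,3) by simp
        have g': "good S P f x' z'" using good_sub(3)[OF g h] .
        have a1: "(m0,x')\<in>P" using m0 FieldI1[OF h(2)] unfolding is_min_def by blast
        have a2: "(z',M0)\<in>P" using M0 FieldI2[OF h(2)] unfolding is_max_def by blast
        have "img f (segment P x' z') \<in> hat (Qp Q0)"
          using claimD[OF Q0 a1 h(2) a2] g' unfolding good_def by blast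
        then show ?case using eq by simp
      next
        case (cat P1 P2) show ?case by (rule hat.cat[OF cat.IH(1) cat.IH(2) \<open>connects P1 P2\<close>])
      qed
    qed
  qed
  then show ?thesis unfolding finitary_def using fin paths by blast
qed

end


lemma min_conv: "is_max R q \<Longrightarrow> is_min (converse R) q"
  unfolding is_max_def is_min_def by simp
lemma max_conv: "is_min R q \<Longrightarrow> is_max (converse R) q"
  unfolding is_max_def is_min_def by simp

context wk begin

lemma claimE: assumes "reach S P f a t Q" shows "\<exists>R\<in>hat W. is_min R (f a) \<and> is_max R (f t)"
  using assms
proof induction
  case (r0 a)
  have aa: "(a,a)\<in>P" using r0 unfolding good_def by blast
  have inW: "img f (segment P a a) \<in> W" unfolding W_char using r0 by blast
  show ?case using in_hat[OF inW img_minmax[OF linP aa]] img_minmax[OF linP aa] by blast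
next
  case (r1 a v Q w)
  obtain R where R: "R \<in> hat W" "is_min R (f a)" "is_max R (f v)" using r1.IH by blast
  define T where "T = img f (segment P v w)"
  have vw: "(v,w)\<in>P" using r1.hyps(2) unfolding good_def by blast
  have TS: "T \<in> S" using r1.hyps(2) unfolding good_def T_def by blast
  have TW: "T \<in> W" unfolding W_char T_def using r1.hyps(2) by blast
  have linT: "lin T" using linS[OF TS] .
  have Tmin: "is_min T (f v)" and Tmax: "is_max T (f w)" unfolding T_def using img_minmax[OF linP vw] by blast+
  obtain F where F: "finite F" "F \<subseteq> S" "Field R = \<Union>(Field ` F)" using hat_fin[OF dS W_S R(1)] by blast
  have cF: "\<forall>G\<in>F. complete_in T (Field T \<inter> Field G)" using compS[OF TS] F(2) by blast
  have fvT: "f v \<in> Field T" using Tmin unfolding is_min_def by blast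
  have fvR: "f v \<in> Field R" using R(3) unfolding is_max_def by blast
  have ne: "Field T \<inter> \<Union>(Field ` F) \<noteq> {}" using fvT fvR F(3) by blast
  obtain m where m: "m \<in> Field T \<inter> Field R" "\<forall>z\<in>Field T \<inter> Field R. (z,m)\<in>T"
    using maxfin[OF linT F(1) cF ne] F(3) by auto
  have lR: "lin R" using hat_lin[OF W_lin R(1)] .
  have am: "(f a, m)\<in>R" using R(2) m(1) unfolding is_min_def by blast
  have mw: "(m, f w)\<in>T" using Tmax m(1) unfolding is_max_def by blast
  define R' where "R' = segment R (f a) m"
  define T' where "T' = segment T m (f w)"
  have R'h: "R' \<in> hat W" unfolding R'_def by (rule hat_seg[OF W_lin R(1) am])
  have T'h: "T' \<in> hat W" unfolding T'_def by (rule hat.seg[OF TW mw])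
  have R'mm: "is_min R' (f a)" "is_max R' m" unfolding R'_def using seg_minmax[OF lR am] by blast+
  have T'mm: "is_min T' m" "is_max T' (f w)" unfolding T'_def using seg_minmax[OF linT mw] by blast+
  have FT': "Field T' = {z. (m,z)\<in>T \<and> (z,f w)\<in>T}" unfolding T'_def using seg_Field[OF linT mw] .
  have FR': "Field R' \<subseteq> Field R" unfolding R'_def by (rule Field_seg_sub)
  have con: "connects R' T'" unfolding connects_def
  proof (intro exI conjI)
    show "is_max R' m" using R'mm(2) .
    show "is_min T' m" using T'mm(1) .
    show "Field R' \<inter> Field T' = {m}"
    proof
      show "Field R' \<inter> Field T' \<subseteq> {m}"
      proof
        fix z assume z: "z \<in> Field R' \<inter> Field T'"
        then have mz: "(m,z)\<in>T" using FT' by blast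
        have "z \<in> Field T" using FieldI2[OF mz] .
        moreover have "z \<in> Field R" using z FR' by blast
        ultimately have "(z,m)\<in>T" using m(2) by blast
        then have "z = m" using linD(3)[OF linT _ mz] by blast
        then show "z \<in> {m}" by simp
      qed
      have "m \<in> Field R'" using R'mm(2) unfolding is_max_def by blast
      moreover have "m \<in> Field T'" using T'mm(1) unfolding is_min_def by blast
      ultimately show "{m} \<subseteq> Field R' \<inter> Field T'" by blast
    qed
  qed
  have "concat R' T' \<in> hat W" by (rule hat.cat[OF R'h T'h con])
  then show ?case using concat_min[OF R'mm(1)] concat_max[OF T'mm(2)] by blast
qed

lemma ground_W: "ground (hat W \<union> converse ` hat W) \<subseteq> f ` Field P"
proof
  fix y assume "y \<in> ground (hat W \<union> converse ` hat W)"
  then obtain X where X: "X \<in> hat W \<union> converse ` hat W" "y \<in> Field X" unfolding ground_def by blast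
  then obtain R0 where R0: "R0 \<in> hat W" "Field X = Field R0" by auto
  have "y \<in> ground W" using hat_Field[OF R0(1)] R0(2) X(2) by blast
  then obtain Y where Y: "Y \<in> W" "y \<in> Field Y" unfolding ground_def by blast
  then obtain x z where "Y = img f (segment P x z)" unfolding W_char by blast
  then have "Field Y = f ` Field (segment P x z)" by (simp add: img_Field)
  then have "Field Y \<subseteq> f ` Field P" using image_mono[OF Field_seg_sub[of P x z]] by simp
  then show "y \<in> f ` Field P" using Y(2) by blast
qed

lemma connected_part: "dipath_connected (hat W)"
proof -
  define B where "B = hat (hat W \<union> converse ` hat W)"
  have pathB: "sim B (f a) (f b)" if ab: "(a,b)\<in>P" for a b
  proof -
    obtain Q where "reach S P f a b Q" using reach_all[OF ab] by blast
    then obtain R where R: "R \<in> hat W" "is_min R (f a)" "is_max R (f b)" using claimE by blast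
    have "R \<in> B" unfolding B_def by (rule in_hat[OF _ R(2,3)]) (use R(1) in blast)
    then show ?thesis unfolding sim_def using R by blast
  qed
  have pathB': "sim B (f b) (f a)" if ab: "(a,b)\<in>P" for a b
  proof -
    obtain Q where "reach S P f a b Q" using reach_all[OF ab] by blast
    then obtain R where R: "R \<in> hat W" "is_min R (f a)" "is_max R (f b)" using claimE by blast
    have c: "is_min (converse R) (f b)" "is_max (converse R) (f a)" using min_conv[OF R(3)] max_conv[OF R(2)] .
    have "converse R \<in> B" unfolding B_def by (rule in_hat[OF _ c]) (use R(1) in blast)
    then show ?thesis unfolding sim_def using c by blast
  qed
  have gB: "ground B \<subseteq> f ` Field P"
  proof
    fix y assume "y \<in> ground B"
    then obtain X where "X \<in> B" "y \<in> Field X" unfolding ground_def by blast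
    then show "y \<in> f ` Field P" using hat_Field[of X] ground_W unfolding B_def by blast
  qed
  obtain m0 M0 where m0: "is_min P m0" and M0: "is_max P M0" using minmaxP by blast
  have m0F: "m0 \<in> Field P" using m0 unfolding is_min_def by blast
  have m0m0: "(m0,m0)\<in>P" using linD(1)[OF linP m0F] .
  have "sim B (f m0) (f m0)" using pathB[OF m0m0] .
  then obtain R where "R \<in> B" "is_min R (f m0)" unfolding sim_def by blast
  then have "f m0 \<in> ground B" unfolding ground_def is_min_def by blast
  then have ne: "ground B \<noteq> {}" by blast
  have all: "\<forall>x\<in>ground B. \<forall>y\<in>ground B. sim B x y"
  proof (intro ballI)
    fix x y assume "x \<in> ground B" "y \<in> ground B"
    then obtain a b where ab: "a \<in> Field P" "b \<in> Field P" "x = f a" "y = f b" using gB by blast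
    show "sim B x y"
    proof (cases "(a,b)\<in>P")
      case True then show ?thesis using pathB ab by blast
    next
      case False
      then have "(b,a)\<in>P" using linD(4)[OF linP ab(1,2)] by blast
      then show ?thesis using pathB' ab by blast
    qed
  qed
  show ?thesis unfolding dipath_connected_def path_connected_space_def bar_def
    using ne all unfolding B_def by blast
qed

end

theorem mainTheorem3:
  fixes S :: "'a rel set" and P :: "'b rel" and f :: "'b \<Rightarrow> 'a"
  assumes "dipath_space S"
    and "walk S P f"
  shows "finitary (induced_space S P f) \<and> dipath_connected (induced_space S P f)"
proof -
  interpret wk S P f by unfold_locales (fact assms)+
  show ?thesis unfolding induced_space_def using finitary_part connected_part by blast
qed

end
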